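(* Let $F:\mathcal{P}(V,A)\to S_2(A)$ be a consular election rule satisfying SPP and SPO. Let $P$ be a profile with $F(P)=\{a,b\}$, let $i$ be a voter, $s\in A$, and let $P_i'$ be the linear order obtained from $P_i$ by moving $s$ down some number of positions (the relative order of the other alternatives unchanged). If $s\notin\{a,b\}$, then $F(P_i'P_{-i})=F(P)$. If $s=a$ (the case $s=b$ being symmetric), then either $F(P_i'P_{-i})=F(P)$, or $F(P_i'P_{-i})=\{c,b\}$ for some $c\neq s$; and the latter happens only if $s$ drops below $c$, i.e. $s\succ_i c$ in $P_i$ and $c\succ_i' s$ in $P_i'$.
   Context: $V$ is a finite nonempty set of voters, $A$ a finite set of alternatives; a profile $P$ assigns to each voter $i$ a linear order $P_i$ on $A$; $P_i'P_{-i}$ replaces voter $i$'s order by $P_i'$. $S_2(A)$ is the set of 2-element subsets of $A$; a consular election rule is a map $F:\mathcal{P}(V,A)\to S_2(A)$. SPO: for all $P$, $i$, $P_i'$, $\mathrm{best}(P_i,F(P))\succeq_i\mathrm{best}(P_i,F(P_i'P_{-i}))$; SPP: same with $\mathrm{worst}$, where $\mathrm{best}(P_i,W)$, $\mathrm{worst}(P_i,W)$ are the $P_i$-best and $P_i$-worst elements of $W$. *)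

theory Defs
  imports Main
begin

text \<open>Convention: a linear order on A is a relation R with linear_order_on A R;
  (x,y) \<in> R means "x is ranked at least as high as y" (x weakly preferred to y).\<close>

definition profiles :: "'v set \<Rightarrow> 'a set \<Rightarrow> ('v \<Rightarrow> 'a rel) set" where
  "profiles V A = {P. (\<forall>i\<in>V. linear_order_on A (P i)) \<and> (\<forall>i. i \<notin> V \<longrightarrow> P i = {})}"

definition S2 :: "'a set \<Rightarrow> 'a set set" where
  "S2 A = {W. W \<subseteq> A \<and> card W = 2}"

definition consular_rule :: "'v set \<Rightarrow> 'a set \<Rightarrow> (('v \<Rightarrow> 'a rel) \<Rightarrow> 'a set) \<Rightarrow> bool" where
  "consular_rule V A F \<longleftrightarrow> (\<forall>P\<in>profiles V A. F P \<in> S2 A)"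

definition best :: "'a rel \<Rightarrow> 'a set \<Rightarrow> 'a" where
  "best R W = (THE w. w \<in> W \<and> (\<forall>x\<in>W. (w, x) \<in> R))"

definition worst :: "'a rel \<Rightarrow> 'a set \<Rightarrow> 'a" where
  "worst R W = (THE w. w \<in> W \<and> (\<forall>x\<in>W. (x, w) \<in> R))"

definition SPO :: "'v set \<Rightarrow> 'a set \<Rightarrow> (('v \<Rightarrow> 'a rel) \<Rightarrow> 'a set) \<Rightarrow> bool" where
  "SPO V A F \<longleftrightarrow> (\<forall>P\<in>profiles V A. \<forall>i\<in>V. \<forall>Q. linear_order_on A Q \<longrightarrow>
     (best (P i) (F P), best (P i) (F (P(i := Q)))) \<in> P i)"

definition SPP :: "'v set \<Rightarrow> 'a set \<Rightarrow> (('v \<Rightarrow> 'a rel) \<Rightarrow> 'a set) \<Rightarrow> bool" where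
  "SPP V A F \<longleftrightarrow> (\<forall>P\<in>profiles V A. \<forall>i\<in>V. \<forall>Q. linear_order_on A Q \<longrightarrow>
     (worst (P i) (F P), worst (P i) (F (P(i := Q)))) \<in> P i)"

text \<open>Q is obtained from the linear order R by moving s down some (possibly zero)
  number of positions: the relative order of the other alternatives is unchanged,
  and every alternative ranked below s in Q was already ranked below s in R.\<close>
definition moved_down :: "'a set \<Rightarrow> 'a rel \<Rightarrow> 'a \<Rightarrow> 'a rel \<Rightarrow> bool" where
  "moved_down A R s Q \<longleftrightarrow> linear_order_on A Q \<and>
     (\<forall>x\<in>A. \<forall>y\<in>A. x \<noteq> s \<longrightarrow> y \<noteq> s \<longrightarrow> ((x, y) \<in> Q \<longleftrightarrow> (x, y) \<in> R)) \<and>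
     (\<forall>x\<in>A. (s, x) \<in> Q \<longrightarrow> (s, x) \<in> R)"

end

theory Submission
  imports Defs
begin

lemma linD:
  assumes "linear_order_on A R"
  shows linD_sub: "(x,y) \<in> R \<Longrightarrow> x \<in> A \<and> y \<in> A"
    and linD_refl: "x \<in> A \<Longrightarrow> (x,x) \<in> R"
    and linD_trans: "(x,y) \<in> R \<Longrightarrow> (y,z) \<in> R \<Longrightarrow> (x,z) \<in> R"
    and linD_antisym: "(x,y) \<in> R \<Longrightarrow> (y,x) \<in> R \<Longrightarrow> x = y"
    and linD_total: "x \<in> A \<Longrightarrow> y \<in> A \<Longrightarrow> (x,y) \<in> R \<or> (y,x) \<in> R"
proof -
  have sub: "R \<subseteq> A \<times> A" and rf: "refl_on A R" and tr: "trans R" and an: "antisym R" and to: "total_on A R"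
    using assms unfolding linear_order_on_def partial_order_on_def preorder_on_def by auto
  show "(x,y) \<in> R \<Longrightarrow> x \<in> A \<and> y \<in> A" using sub by auto
  show "x \<in> A \<Longrightarrow> (x,x) \<in> R" using rf unfolding refl_on_def by auto
  show "(x,y) \<in> R \<Longrightarrow> (y,z) \<in> R \<Longrightarrow> (x,z) \<in> R" using tr unfolding trans_def by blast
  show "(x,y) \<in> R \<Longrightarrow> (y,x) \<in> R \<Longrightarrow> x = y" using an unfolding antisym_def by blast
  show "x \<in> A \<Longrightarrow> y \<in> A \<Longrightarrow> (x,y) \<in> R \<or> (y,x) \<in> R"
    using to rf unfolding total_on_def refl_on_def by (cases "x = y") auto
qed

lemma best2:
  assumes "linear_order_on A R" "(u,v) \<in> R" "u \<noteq> v"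
  shows "best R {u,v} = u" "worst R {u,v} = v" "best R {v,u} = u" "worst R {v,u} = v"
proof -
  have uA: "u \<in> A" "v \<in> A" using linD_sub[OF assms(1) assms(2)] by auto
  have b: "best R {u,v} = u"
    unfolding best_def
    apply (rule the_equality)
    using assms uA linD_refl[OF assms(1)] linD_antisym[OF assms(1)] by auto
  have w: "worst R {u,v} = v"
    unfolding worst_def
    apply (rule the_equality)
    using assms uA linD_refl[OF assms(1)] linD_antisym[OF assms(1)] by auto
  show "best R {u,v} = u" "worst R {u,v} = v" by fact+
  show "best R {v,u} = u" "worst R {v,u} = v" using b w by (simp_all add: insert_commute)
qed

lemma core1:
  assumes lR: "linear_order_on A R" and lQ: "linear_order_on A Q"
    and ag: "\<forall>x\<in>A. \<forall>y\<in>A. x \<noteq> s \<longrightarrow> y \<noteq> s \<longrightarrow> ((x, y) \<in> Q \<longleftrightarrow> (x, y) \<in> R)"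
    and dn: "\<forall>x\<in>A. (s, x) \<in> Q \<longrightarrow> (s, x) \<in> R"
    and sA: "s \<in> A" and aA: "a \<in> A" and bA: "b \<in> A" and cA: "c \<in> A" and dA: "d \<in> A"
    and ab: "a \<noteq> b" and cd: "c \<noteq> d" and abR: "(a,b) \<in> R" and cdR: "(c,d) \<in> R"
    and sp1: "(best R {a,b}, best R {c,d}) \<in> R"
    and sp2: "(worst R {a,b}, worst R {c,d}) \<in> R"
    and sp3: "(best Q {c,d}, best Q {a,b}) \<in> Q"
    and sp4: "(worst Q {c,d}, worst Q {a,b}) \<in> Q"
    and sa: "s \<noteq> a" and sb: "s \<noteq> b"
  shows "{c,d} = {a,b}"
proof -
  note tR = linD_trans[OF lR] and aR = linD_antisym[OF lR] and toR = linD_total[OF lR]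
  note tQ = linD_trans[OF lQ] and aQ = linD_antisym[OF lQ] and toQ = linD_total[OF lQ]
  have abQ: "(a,b) \<in> Q" using ag abR aA bA sa sb by auto
  have ac: "(a,c) \<in> R" using sp1 best2[OF lR abR ab] best2[OF lR cdR cd] by simp
  have bd: "(b,d) \<in> R" using sp2 best2[OF lR abR ab] best2[OF lR cdR cd] by simp
  have bQ: "best Q {a,b} = a" "worst Q {a,b} = b" using best2[OF lQ abQ ab] by simp_all
  show ?thesis
  proof (cases "s = c")
    case True
    show ?thesis
    proof (cases "(s,d) \<in> Q")
      case True
      then have "best Q {c,d} = s" using best2[OF lQ _ cd] \<open>s = c\<close> by simp
      then have "(s,a) \<in> Q" using sp3 bQ by simp
      then have "(s,a) \<in> R" using dn aA by auto
      then show ?thesis using ac \<open>s = c\<close> aR sa by blast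
    next
      case False
      then have dsQ: "(d,s) \<in> Q" using toQ dA sA by blast
      have "best Q {c,d} = d" "worst Q {c,d} = s" using best2[OF lQ dsQ] cd \<open>s = c\<close> by auto
      then have "(d,a) \<in> Q" "(s,b) \<in> Q" using sp3 sp4 bQ by simp_all
      then have "(d,a) \<in> R" "(s,b) \<in> R" using ag dn dA aA bA cd \<open>s = c\<close> sa by auto
      then have "(s,a) \<in> R" using tR bd by blast
      then show ?thesis using ac \<open>s = c\<close> aR sa by blast
    qed
  next
    case sc: False
    show ?thesis
    proof (cases "s = d")
      case True
      have csQ: "(c,s) \<in> Q"
      proof (rule ccontr)
        assume "(c,s) \<notin> Q"
        then have "(s,c) \<in> Q" using toQ cA sA by blast
        then have "(s,c) \<in> R" using dn cA by auto
        then show False using cdR True aR cd by blast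
      qed
      have "best Q {c,d} = c" "worst Q {c,d} = s" using best2[OF lQ csQ] cd True by auto
      then have "(c,a) \<in> Q" "(s,b) \<in> Q" using sp3 sp4 bQ by simp_all
      then have "(c,a) \<in> R" "(s,b) \<in> R" using ag dn cA aA bA sc sa by auto
      moreover have "(b,s) \<in> R" using bd True by simp
      ultimately show ?thesis using aR sb by blast
    next
      case sd: False
      have cdQ: "(c,d) \<in> Q" using ag cdR cA dA sc sd by auto
      have "best Q {c,d} = c" "worst Q {c,d} = d" using best2[OF lQ cdQ cd] by auto
      then have "(c,a) \<in> Q" "(d,b) \<in> Q" using sp3 sp4 bQ by simp_all
      then have "(c,a) \<in> R" "(d,b) \<in> R" using ag cA aA bA dA sc sd sa sb by auto
      then have "c = a" "d = b" using ac bd aR by blast+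
      then show ?thesis by simp
    qed
  qed
qed

lemma core2:
  assumes lR: "linear_order_on A R" and lQ: "linear_order_on A Q"
    and ag: "\<forall>x\<in>A. \<forall>y\<in>A. x \<noteq> s \<longrightarrow> y \<noteq> s \<longrightarrow> ((x, y) \<in> Q \<longleftrightarrow> (x, y) \<in> R)"
    and dn: "\<forall>x\<in>A. (s, x) \<in> Q \<longrightarrow> (s, x) \<in> R"
    and sA: "s \<in> A" and bA: "b \<in> A" and cA: "c \<in> A" and dA: "d \<in> A"
    and sb: "s \<noteq> b" and cd: "c \<noteq> d" and cdR: "(c,d) \<in> R"
    and sp1: "(best R {s,b}, best R {c,d}) \<in> R"
    and sp2: "(worst R {s,b}, worst R {c,d}) \<in> R"
    and sp3: "(best Q {c,d}, best Q {s,b}) \<in> Q"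
    and sp4: "(worst Q {c,d}, worst Q {s,b}) \<in> Q"
    and adj: "\<forall>x\<in>A. \<forall>y\<in>A. x \<noteq> s \<longrightarrow> y \<noteq> s \<longrightarrow> (s,x) \<in> R \<longrightarrow> (x,s) \<in> Q
               \<longrightarrow> (s,y) \<in> R \<longrightarrow> (y,s) \<in> Q \<longrightarrow> x = y"
  shows "{c,d} = {s,b} \<or> (\<exists>e. e \<noteq> s \<and> {c,d} = {e,b} \<and> (s,e) \<in> R \<and> (e,s) \<in> Q)"
proof -
  note tR = linD_trans[OF lR] and aR = linD_antisym[OF lR] and toR = linD_total[OF lR]
  note tQ = linD_trans[OF lQ] and aQ = linD_antisym[OF lQ] and toQ = linD_total[OF lQ]
  have cdRb: "best R {c,d} = c" "worst R {c,d} = d" using best2[OF lR cdR cd] by simp_all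
  show ?thesis
  proof (cases "(b,s) \<in> R")
    case bsR: True
    have bsQ: "(b,s) \<in> Q"
    proof (rule ccontr)
      assume "(b,s) \<notin> Q"
      then have "(s,b) \<in> Q" using toQ bA sA by blast
      then have "(s,b) \<in> R" using dn bA by blast
      then show False using bsR aR sb by blast
    qed
    have bc: "(b,c) \<in> R" and sd: "(s,d) \<in> R"
      using sp1 sp2 best2[OF lR bsR] sb cdRb by auto
    have bQ: "best Q {s,b} = b" "worst Q {s,b} = s" using best2[OF lQ bsQ] sb by auto
    show ?thesis
    proof (cases "s = c")
      case True
      show ?thesis
      proof (cases "(s,d) \<in> Q")
        case True
        then have "best Q {c,d} = s" using best2[OF lQ _ cd] \<open>s = c\<close> by simp
        then have "(s,b) \<in> Q" using sp3 bQ by simp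
        then show ?thesis using bsQ aQ sb by blast
      next
        case False
        then have dsQ: "(d,s) \<in> Q" using toQ dA sA by blast
        have "best Q {c,d} = d" using best2[OF lQ dsQ] cd \<open>s = c\<close> by auto
        then have "(d,b) \<in> Q" using sp3 bQ by simp
        then have "(d,b) \<in> R" using ag dA bA cd \<open>s = c\<close> sb by auto
        then have "(d,s) \<in> R" using tR bsR by blast
        then show ?thesis using sd aR cd \<open>s = c\<close> by blast
      qed
    next
      case sc: False
      show ?thesis
      proof (cases "s = d")
        case True
        have csQ: "(c,s) \<in> Q"
        proof (rule ccontr)
          assume "(c,s) \<notin> Q"
          then have "(s,c) \<in> Q" using toQ cA sA by blast
          then have "(s,c) \<in> R" using dn cA by blast
          then show False using cdR True aR cd by blast
        qed
        have "best Q {c,d} = c" using best2[OF lQ csQ] cd True by auto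
        then have "(c,b) \<in> Q" using sp3 bQ by simp
        then have "(c,b) \<in> R" using ag cA bA sc sb by auto
        then have "c = b" using bc aR by blast
        then show ?thesis using True by auto
      next
        case sd': False
        have cdQ: "(c,d) \<in> Q" using ag cdR cA dA sc sd' by auto
        have "best Q {c,d} = c" "worst Q {c,d} = d" using best2[OF lQ cdQ cd] by auto
        then have "(c,b) \<in> Q" "(d,s) \<in> Q" using sp3 sp4 bQ by simp_all
        then have "(c,b) \<in> R" using ag cA bA sc sb by auto
        then have "c = b" using bc aR by blast
        then show ?thesis using sd' sd \<open>(d,s) \<in> Q\<close> by (auto simp: insert_commute)
      qed
    qed
  next
    case False
    then have sbR: "(s,b) \<in> R" using toR sA bA by blast
    have sc: "(s,c) \<in> R" and bd: "(b,d) \<in> R"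
      using sp1 sp2 best2[OF lR sbR] sb cdRb by auto
    have sd: "s \<noteq> d"
    proof
      assume "s = d"
      then have "(c,s) \<in> R" using cdR by simp
      then show False using sc aR cd \<open>s = d\<close> by blast
    qed
    show ?thesis
    proof (cases "(s,b) \<in> Q")
      case sbQ: True
      have bQ: "best Q {s,b} = s" "worst Q {s,b} = b" using best2[OF lQ sbQ] sb by auto
      show ?thesis
      proof (cases "s = c")
        case True
        show ?thesis
        proof (cases "(s,d) \<in> Q")
          case True
          then have "worst Q {c,d} = d" using best2[OF lQ _ cd] \<open>s = c\<close> by simp
          then have "(d,b) \<in> Q" using sp4 bQ by simp
          then have "(d,b) \<in> R" using ag dA bA sd sb by auto
          then have "d = b" using bd aR by blast
          then show ?thesis using \<open>s = c\<close> by auto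
        next
          case False
          then have dsQ: "(d,s) \<in> Q" using toQ dA sA by blast
          have "(b,d) \<in> Q" using ag bd bA dA sd sb by auto
          then have "(b,s) \<in> Q" using tQ dsQ by blast
          then show ?thesis using sbQ aQ sb by blast
        qed
      next
        case sc': False
        have cdQ: "(c,d) \<in> Q" using ag cdR cA dA sc' sd by auto
        have "best Q {c,d} = c" "worst Q {c,d} = d" using best2[OF lQ cdQ cd] by auto
        then have "(c,s) \<in> Q" "(d,b) \<in> Q" using sp3 sp4 bQ by simp_all
        then have "(d,b) \<in> R" using ag dA bA sd sb by auto
        then have "d = b" using bd aR by blast
        then show ?thesis using sc' sc \<open>(c,s) \<in> Q\<close> by auto
      qed
    next
      case False
      then have bsQ: "(b,s) \<in> Q" using toQ sA bA by blast
      have bQ: "best Q {s,b} = b" "worst Q {s,b} = s" using best2[OF lQ bsQ] sb by auto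
      show ?thesis
      proof (cases "s = c")
        case True
        show ?thesis
        proof (cases "(s,d) \<in> Q")
          case True
          then have "best Q {c,d} = s" using best2[OF lQ _ cd] \<open>s = c\<close> by simp
          then have "(s,b) \<in> Q" using sp3 bQ by simp
          then show ?thesis using bsQ aQ sb by blast
        next
          case False
          then have dsQ: "(d,s) \<in> Q" using toQ dA sA by blast
          have "best Q {c,d} = d" using best2[OF lQ dsQ] cd \<open>s = c\<close> by auto
          then have "(d,b) \<in> Q" using sp3 bQ by simp
          then have "(d,b) \<in> R" using ag dA bA sd sb by auto
          then have "d = b" using bd aR by blast
          then show ?thesis using \<open>s = c\<close> by auto
        qed
      next
        case sc': False
        have cdQ: "(c,d) \<in> Q" using ag cdR cA dA sc' sd by auto
        have "best Q {c,d} = c" "worst Q {c,d} = d" using best2[OF lQ cdQ cd] by auto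
        then have cbQ: "(c,b) \<in> Q" and dsQ: "(d,s) \<in> Q" using sp3 sp4 bQ by simp_all
        have sdR: "(s,d) \<in> R" using tR sc cdR by blast
        have "d = b" using adj dA bA sd sb sdR dsQ sbR bsQ by metis
        moreover have "(c,s) \<in> Q" using tQ cdQ dsQ by blast
        ultimately show ?thesis using sc' sc by auto
      qed
    qed
  qed
qed

lemma onestep:
  assumes cons: "consular_rule V A F" and spp: "SPP V A F" and spo: "SPO V A F"
    and P1: "P1 \<in> profiles V A" and iV: "i \<in> V" and md: "moved_down A (P1 i) s Q"
    and FP: "F P1 = {a,b}" and sA: "s \<in> A"
  shows "(s \<noteq> a \<longrightarrow> s \<noteq> b \<longrightarrow> F (P1(i := Q)) = {a,b}) \<and>
     (s = a \<longrightarrow> (\<forall>x\<in>A. \<forall>y\<in>A. x \<noteq> s \<longrightarrow> y \<noteq> s \<longrightarrow> (s,x) \<in> P1 i \<longrightarrow> (x,s) \<in> Q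
               \<longrightarrow> (s,y) \<in> P1 i \<longrightarrow> (y,s) \<in> Q \<longrightarrow> x = y) \<longrightarrow>
       F (P1(i := Q)) = {a,b} \<or> (\<exists>e. e \<noteq> s \<and> F (P1(i := Q)) = {e,b} \<and> (s,e) \<in> P1 i \<and> (e,s) \<in> Q))"
proof -
  define R where "R = P1 i"
  define P' where "P' = P1(i := Q)"
  have lR: "linear_order_on A R" using P1 iV unfolding R_def profiles_def by auto
  have lQ: "linear_order_on A Q" and ag: "\<forall>x\<in>A. \<forall>y\<in>A. x \<noteq> s \<longrightarrow> y \<noteq> s \<longrightarrow> ((x, y) \<in> Q \<longleftrightarrow> (x, y) \<in> R)"
    and dn: "\<forall>x\<in>A. (s, x) \<in> Q \<longrightarrow> (s, x) \<in> R"
    using md unfolding moved_down_def R_def by auto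
  have P'p: "P' \<in> profiles V A" using P1 lQ iV unfolding P'_def profiles_def by auto
  have bk: "P'(i := R) = P1" unfolding P'_def R_def by auto
  have P'i: "P' i = Q" unfolding P'_def by simp
  have sp1: "(best R (F P1), best R (F P')) \<in> R"
    using spo P1 iV lQ unfolding SPO_def R_def P'_def by blast
  have sp2: "(worst R (F P1), worst R (F P')) \<in> R"
    using spp P1 iV lQ unfolding SPP_def R_def P'_def by blast
  have sp3: "(best Q (F P'), best Q (F P1)) \<in> Q"
    using spo P'p iV lR bk P'i unfolding SPO_def by metis
  have sp4: "(worst Q (F P'), worst Q (F P1)) \<in> Q"
    using spp P'p iV lR bk P'i unfolding SPP_def by metis
  have S1: "F P1 \<in> S2 A" using cons P1 unfolding consular_rule_def by blast
  then have ab: "a \<noteq> b" and aA: "a \<in> A" and bA: "b \<in> A" using FP unfolding S2_def by auto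
  have S': "F P' \<in> S2 A" using cons P'p unfolding consular_rule_def by blast
  obtain c d where cA: "c \<in> A" and dA: "d \<in> A" and cd: "c \<noteq> d" and cdR: "(c,d) \<in> R"
    and FP': "F P' = {c,d}"
  proof -
    from S' obtain x y where xy: "F P' = {x,y}" "x \<noteq> y" "x \<in> A" "y \<in> A"
      unfolding S2_def card_2_iff by auto
    show ?thesis
    proof (cases "(x,y) \<in> R")
      case True then show ?thesis using that xy by blast
    next
      case False
      then have "(y,x) \<in> R" using linD_total[OF lR] xy by blast
      then show ?thesis using that[of y x] xy by (auto simp: insert_commute)
    qed
  qed
  show ?thesis
  proof (intro conjI impI)
    assume sa: "s \<noteq> a" and sb: "s \<noteq> b"
    show "F (P1(i := Q)) = {a,b}"
    proof (cases "(a,b) \<in> R")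
      case True
      show ?thesis using core1[OF lR lQ ag dn sA aA bA cA dA ab cd True cdR] sp1 sp2 sp3 sp4 FP FP' sa sb
        unfolding P'_def by auto
    next
      case False
      then have baR: "(b,a) \<in> R" using linD_total[OF lR] aA bA by blast
      have "{c,d} = {b,a}"
        using core1[OF lR lQ ag dn sA bA aA cA dA ab[symmetric] cd baR cdR] sp1 sp2 sp3 sp4 FP FP' sa sb
        by (auto simp: insert_commute)
      then show ?thesis using FP' unfolding P'_def by (auto simp: insert_commute)
    qed
  next
    assume sa: "s = a"
    assume adj: "\<forall>x\<in>A. \<forall>y\<in>A. x \<noteq> s \<longrightarrow> y \<noteq> s \<longrightarrow> (s,x) \<in> P1 i \<longrightarrow> (x,s) \<in> Q
               \<longrightarrow> (s,y) \<in> P1 i \<longrightarrow> (y,s) \<in> Q \<longrightarrow> x = y"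
    have sb: "s \<noteq> b" using sa ab by simp
    have "{c,d} = {s,b} \<or> (\<exists>e. e \<noteq> s \<and> {c,d} = {e,b} \<and> (s,e) \<in> R \<and> (e,s) \<in> Q)"
      using core2[OF lR lQ ag dn sA bA cA dA sb cd cdR] sp1 sp2 sp3 sp4 FP FP' sa adj
      unfolding R_def by auto
    then show "F (P1(i := Q)) = {a,b} \<or> (\<exists>e. e \<noteq> s \<and> F (P1(i := Q)) = {e,b} \<and> (s,e) \<in> P1 i \<and> (e,s) \<in> Q)"
      using FP' sa unfolding P'_def R_def by auto
  qed
qed

lemma finite_lowest:
  assumes "finite D" "D \<noteq> {}" "D \<subseteq> A" "linear_order_on A Q"
  shows "\<exists>y\<in>D. \<forall>z\<in>D. (z,y) \<in> Q"
  using assms(1,2,3)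
proof (induction D rule: finite_ne_induct)
  case (singleton x)
  then show ?case using linD_refl[OF assms(4)] by auto
next
  case (insert x F)
  then obtain y where y: "y \<in> F" "\<forall>z\<in>F. (z,y) \<in> Q" by auto
  have xA: "x \<in> A" and yA: "y \<in> A" using insert y by auto
  show ?case
  proof (cases "(x,y) \<in> Q")
    case True then show ?thesis using y by auto
  next
    case False
    then have "(y,x) \<in> Q" using linD_total[OF assms(4) xA yA] by blast
    then show ?thesis using y linD_trans[OF assms(4)] linD_refl[OF assms(4) xA] by blast
  qed
qed

lemma swap_lin:
  assumes lQ: "linear_order_on A Q" and ys: "(y,s) \<in> Q" and yns: "y \<noteq> s"
    and adjQ: "\<forall>z. (y,z) \<in> Q \<longrightarrow> (z,s) \<in> Q \<longrightarrow> z = y \<or> z = s"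
  shows "linear_order_on A (Q - {(y,s)} \<union> {(s,y)})"
proof -
  note sub = linD_sub[OF lQ] and rf = linD_refl[OF lQ] and tr = linD_trans[OF lQ]
    and an = linD_antisym[OF lQ] and to = linD_total[OF lQ]
  have yA: "y \<in> A" and sA: "s \<in> A" using linD_sub[OF lQ ys] by auto
  let ?Q1 = "Q - {(y,s)} \<union> {(s,y)}"
  have "?Q1 \<subseteq> A \<times> A"
  proof
    fix p assume "p \<in> ?Q1"
    then show "p \<in> A \<times> A" using linD_sub[OF lQ, of "fst p" "snd p"] yA sA by (cases p) auto
  qed
  moreover have "refl_on A ?Q1" unfolding refl_on_def using rf yns by blast
  moreover have "trans ?Q1"
  proof (rule transI)
    fix u v w assume uv: "(u,v) \<in> ?Q1" and vw: "(v,w) \<in> ?Q1"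
    show "(u,w) \<in> ?Q1"
    proof (cases "(u,v) = (s,y)")
      case True
      then have u: "u = s" "v = y" by auto
      show ?thesis
      proof (cases "(v,w) = (s,y)")
        case True then show ?thesis using u yns by auto
      next
        case False
        then have yw: "(y,w) \<in> Q" "(y,w) \<noteq> (y,s)" using vw u by auto
        show ?thesis
        proof (cases "w = y")
          case True then show ?thesis using u by auto
        next
          case False
          have "(s,w) \<in> Q"
          proof (rule ccontr)
            assume "(s,w) \<notin> Q"
            then have "(w,s) \<in> Q" using to sA sub yw(1) by blast
            then show False using adjQ yw False by auto
          qed
          then show ?thesis using u False yns by auto
        qed
      qed
    next
      case F1: False
      then have uvQ: "(u,v) \<in> Q" "(u,v) \<noteq> (y,s)" using uv by auto
      show ?thesis
      proof (cases "(v,w) = (s,y)")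
        case True
        then have vw': "v = s" "w = y" by auto
        show ?thesis
        proof (cases "u = s")
          case True then show ?thesis using vw' by auto
        next
          case us: False
          have "u \<noteq> y" using uvQ vw' by auto
          have "(u,y) \<in> Q"
          proof (rule ccontr)
            assume "(u,y) \<notin> Q"
            then have "(y,u) \<in> Q" using to yA sub uvQ(1) by blast
            then show False using adjQ uvQ vw' us \<open>u \<noteq> y\<close> by auto
          qed
          then show ?thesis using vw' \<open>u \<noteq> y\<close> by auto
        qed
      next
        case False
        then have vwQ: "(v,w) \<in> Q" "(v,w) \<noteq> (y,s)" using vw by auto
        have uw: "(u,w) \<in> Q" using tr uvQ(1) vwQ(1) by blast
        show ?thesis
        proof (cases "(u,w) = (y,s)")
          case True
          then have "u = y" "w = s" by auto
          then have "v = y \<or> v = s" using adjQ uvQ vwQ by auto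
          then show ?thesis using uvQ vwQ \<open>u = y\<close> \<open>w = s\<close> by auto
        next
          case False then show ?thesis using uw by auto
        qed
      qed
    qed
  qed
  moreover have "antisym ?Q1"
  proof (rule antisymI)
    fix u v assume h: "(u,v) \<in> ?Q1" "(v,u) \<in> ?Q1"
    have h1: "((u,v) \<in> Q \<and> (u,v) \<noteq> (y,s)) \<or> (u = s \<and> v = y)" using h(1) by blast
    have h2: "((v,u) \<in> Q \<and> (v,u) \<noteq> (y,s)) \<or> (v = s \<and> u = y)" using h(2) by blast
    show "u = v" using h1 h2 an[of u v] by blast
  qed
  moreover have "total_on A ?Q1"
    unfolding total_on_def
  proof (intro ballI impI)
    fix u v assume uA: "u \<in> A" and vA: "v \<in> A" and uv: "u \<noteq> v"
    show "(u,v) \<in> ?Q1 \<or> (v,u) \<in> ?Q1"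
    proof (cases "(u,v) = (y,s) \<or> (v,u) = (y,s)")
      case True then show ?thesis by auto
    next
      case False
      then show ?thesis using to[OF uA vA] by auto
    qed
  qed
  ultimately show ?thesis
    unfolding linear_order_on_def partial_order_on_def preorder_on_def by simp
qed

lemma induct_main:
  assumes cons: "consular_rule V A F" and spp: "SPP V A F" and spo: "SPO V A F"
    and P: "P \<in> profiles V A" and iV: "i \<in> V" and fA: "finite A"
    and FP: "F P = {a,b}" and sA: "s \<in> A"
  shows "\<forall>Q. moved_down A (P i) s Q \<longrightarrow> card {x\<in>A. x \<noteq> s \<and> (s,x) \<in> P i \<and> (x,s) \<in> Q} = n \<longrightarrow>
     (s \<noteq> a \<longrightarrow> s \<noteq> b \<longrightarrow> F (P(i := Q)) = {a,b}) \<and>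
     (s = a \<longrightarrow> F (P(i := Q)) = {a,b} \<or> (\<exists>e. e \<noteq> s \<and> F (P(i := Q)) = {e,b} \<and> (s,e) \<in> P i \<and> (e,s) \<in> Q))"
proof (induction n)
  case 0
  show ?case
  proof (intro allI impI)
    fix Q assume md: "moved_down A (P i) s Q" and c0: "card {x\<in>A. x \<noteq> s \<and> (s,x) \<in> P i \<and> (x,s) \<in> Q} = 0"
    have "{x\<in>A. x \<noteq> s \<and> (s,x) \<in> P i \<and> (x,s) \<in> Q} = {}" using c0 fA by simp
    then have adj: "\<forall>x\<in>A. \<forall>y\<in>A. x \<noteq> s \<longrightarrow> y \<noteq> s \<longrightarrow> (s,x) \<in> P i \<longrightarrow> (x,s) \<in> Q
               \<longrightarrow> (s,y) \<in> P i \<longrightarrow> (y,s) \<in> Q \<longrightarrow> x = y" by blast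
    show "(s \<noteq> a \<longrightarrow> s \<noteq> b \<longrightarrow> F (P(i := Q)) = {a,b}) \<and>
     (s = a \<longrightarrow> F (P(i := Q)) = {a,b} \<or> (\<exists>e. e \<noteq> s \<and> F (P(i := Q)) = {e,b} \<and> (s,e) \<in> P i \<and> (e,s) \<in> Q))"
    proof (intro conjI impI)
      note O = onestep[OF cons spp spo P iV md FP sA]
      assume h: "s \<noteq> a" "s \<noteq> b"
      show "F (P(i := Q)) = {a,b}" using O[THEN conjunct1, rule_format, OF h] .
    next
      note O = onestep[OF cons spp spo P iV md FP sA]
      assume h: "s = a"
      show "F (P(i := Q)) = {a,b} \<or> (\<exists>e. e \<noteq> s \<and> F (P(i := Q)) = {e,b} \<and> (s,e) \<in> P i \<and> (e,s) \<in> Q)"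
        using mp[OF mp[OF O[THEN conjunct2] h] adj] .
    qed
  qed
next
  case (Suc m)
  show ?case
  proof (intro allI impI)
    fix Q assume md: "moved_down A (P i) s Q"
      and cS: "card {x\<in>A. x \<noteq> s \<and> (s,x) \<in> P i \<and> (x,s) \<in> Q} = Suc m"
    define R where "R = P i"
    define D where "D = {x\<in>A. x \<noteq> s \<and> (s,x) \<in> R \<and> (x,s) \<in> Q}"
    have lR: "linear_order_on A R" using P iV unfolding R_def profiles_def by auto
    have lQ: "linear_order_on A Q" and ag: "\<forall>x\<in>A. \<forall>y\<in>A. x \<noteq> s \<longrightarrow> y \<noteq> s \<longrightarrow> ((x, y) \<in> Q \<longleftrightarrow> (x, y) \<in> R)"
      and dn: "\<forall>x\<in>A. (s, x) \<in> Q \<longrightarrow> (s, x) \<in> R"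
      using md unfolding moved_down_def R_def by auto
    have fD: "finite D" using fA unfolding D_def by simp
    have cD: "card D = Suc m" using cS unfolding D_def R_def by simp
    then have "D \<noteq> {}" by auto
    then obtain y where yD: "y \<in> D" and ylow: "\<forall>z\<in>D. (z,y) \<in> Q"
      using finite_lowest[OF fD _ _ lQ] unfolding D_def by blast
    have yA: "y \<in> A" and ys: "y \<noteq> s" and syR: "(s,y) \<in> R" and ysQ: "(y,s) \<in> Q"
      using yD unfolding D_def by auto
    have adjQ: "\<forall>z. (y,z) \<in> Q \<longrightarrow> (z,s) \<in> Q \<longrightarrow> z = y \<or> z = s"
    proof (intro allI impI)
      fix z assume yz: "(y,z) \<in> Q" and zs: "(z,s) \<in> Q"
      show "z = y \<or> z = s"
      proof (rule ccontr)
        assume "\<not> (z = y \<or> z = s)"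
        then have zy: "z \<noteq> y" "z \<noteq> s" by auto
        have zA: "z \<in> A" using linD_sub[OF lQ yz] by auto
        have "(y,z) \<in> R" using ag yz yA zA ys zy by auto
        then have "(s,z) \<in> R" using linD_trans[OF lR syR] by blast
        then have "z \<in> D" unfolding D_def using zA zy zs by auto
        then have "(z,y) \<in> Q" using ylow by blast
        then show False using linD_antisym[OF lQ yz] zy by auto
      qed
    qed
    define Q1 where "Q1 = Q - {(y,s)} \<union> {(s,y)}"
    have lQ1: "linear_order_on A Q1" unfolding Q1_def using swap_lin[OF lQ ysQ ys adjQ] .
    have Q1Q: "\<And>u v. v \<noteq> s \<Longrightarrow> u \<noteq> s \<Longrightarrow> (u,v) \<in> Q1 \<longleftrightarrow> (u,v) \<in> Q" unfolding Q1_def by auto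
    have md1: "moved_down A R s Q1"
      unfolding moved_down_def
    proof (intro conjI ballI impI)
      show "linear_order_on A Q1" by fact
    next
      fix x z assume "x \<in> A" "z \<in> A" "x \<noteq> s" "z \<noteq> s"
      then show "(x, z) \<in> Q1 \<longleftrightarrow> (x, z) \<in> R" using Q1Q ag by auto
    next
      fix x assume xA: "x \<in> A" and sx: "(s,x) \<in> Q1"
      show "(s,x) \<in> R"
      proof (cases "x = y")
        case True then show ?thesis using syR by simp
      next
        case False
        then have "(s,x) \<in> Q" using sx unfolding Q1_def by auto
        then show ?thesis using dn xA by blast
      qed
    qed
    have D1: "{x\<in>A. x \<noteq> s \<and> (s,x) \<in> P i \<and> (x,s) \<in> Q1} = D - {y}"
      unfolding D_def R_def Q1_def using ys by auto
    have cD1: "card {x\<in>A. x \<noteq> s \<and> (s,x) \<in> P i \<and> (x,s) \<in> Q1} = m"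
      using D1 cD yD fD by simp
    have IH: "(s \<noteq> a \<longrightarrow> s \<noteq> b \<longrightarrow> F (P(i := Q1)) = {a,b}) \<and>
     (s = a \<longrightarrow> F (P(i := Q1)) = {a,b} \<or> (\<exists>e. e \<noteq> s \<and> F (P(i := Q1)) = {e,b} \<and> (s,e) \<in> P i \<and> (e,s) \<in> Q1))"
      using Suc.IH[rule_format, OF md1[unfolded R_def] cD1] .
    define P1 where "P1 = P(i := Q1)"
    have P1p: "P1 \<in> profiles V A" using P lQ1 iV unfolding P1_def profiles_def by auto
    have P1i: "P1 i = Q1" unfolding P1_def by simp
    have P1Q: "P1(i := Q) = P(i := Q)" unfolding P1_def by simp
    have md2: "moved_down A (P1 i) s Q"
      unfolding moved_down_def P1i
    proof (intro conjI ballI impI)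
      show "linear_order_on A Q" by fact
    next
      fix x z assume "x \<in> A" "z \<in> A" "x \<noteq> s" "z \<noteq> s"
      then show "(x, z) \<in> Q \<longleftrightarrow> (x, z) \<in> Q1" using Q1Q by auto
    next
      fix x assume xA: "x \<in> A" and sx: "(s,x) \<in> Q"
      have "x \<noteq> y"
      proof
        assume "x = y"
        then have "(s,y) \<in> Q" using sx by simp
        then show False using linD_antisym[OF lQ ysQ] ys by simp
      qed
      then show "(s,x) \<in> Q1" using sx unfolding Q1_def by auto
    qed
    have adj2: "\<forall>x\<in>A. \<forall>z\<in>A. x \<noteq> s \<longrightarrow> z \<noteq> s \<longrightarrow> (s,x) \<in> P1 i \<longrightarrow> (x,s) \<in> Q
               \<longrightarrow> (s,z) \<in> P1 i \<longrightarrow> (z,s) \<in> Q \<longrightarrow> x = z"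
    proof -
      have "\<And>x. x \<noteq> s \<Longrightarrow> (s,x) \<in> Q1 \<Longrightarrow> (x,s) \<in> Q \<Longrightarrow> x = y"
      proof -
        fix x assume xs: "x \<noteq> s" and "(s,x) \<in> Q1" "(x,s) \<in> Q"
        show "x = y"
        proof (rule ccontr)
          assume "x \<noteq> y"
          then have "(s,x) \<in> Q" using \<open>(s,x) \<in> Q1\<close> unfolding Q1_def by auto
          then show False using \<open>(x,s) \<in> Q\<close> linD_antisym[OF lQ] xs by blast
        qed
      qed
      then show ?thesis unfolding P1i by blast
    qed
    have os1: "\<And>a' b'. F P1 = {a',b'} \<Longrightarrow> s \<noteq> a' \<Longrightarrow> s \<noteq> b' \<Longrightarrow> F (P(i := Q)) = {a',b'}"
    proof -
      fix a' b' assume h: "F P1 = {a',b'}" "s \<noteq> a'" "s \<noteq> b'"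
      have "F (P1(i := Q)) = {a',b'}" using onestep[OF cons spp spo P1p iV md2 h(1) sA, THEN conjunct1, rule_format, OF h(2,3)] .
      then show "F (P(i := Q)) = {a',b'}" unfolding P1Q .
    qed
    have S1: "F P \<in> S2 A" using cons P unfolding consular_rule_def by blast
    then have ab: "a \<noteq> b" using FP unfolding S2_def by auto
    show "(s \<noteq> a \<longrightarrow> s \<noteq> b \<longrightarrow> F (P(i := Q)) = {a,b}) \<and>
     (s = a \<longrightarrow> F (P(i := Q)) = {a,b} \<or> (\<exists>e. e \<noteq> s \<and> F (P(i := Q)) = {e,b} \<and> (s,e) \<in> P i \<and> (e,s) \<in> Q))"
    proof (intro conjI impI)
      assume h: "s \<noteq> a" "s \<noteq> b"
      have "F P1 = {a,b}" unfolding P1_def using IH[THEN conjunct1, rule_format, OF h] .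
      then show "F (P(i := Q)) = {a,b}" using os1 h by blast
    next
      assume sa: "s = a"
      have sb: "s \<noteq> b" using sa ab by simp
      have IH2: "F P1 = {a,b} \<or> (\<exists>e. e \<noteq> s \<and> F P1 = {e,b} \<and> (s,e) \<in> P i \<and> (e,s) \<in> Q1)"
        unfolding P1_def using IH[THEN conjunct2, rule_format, OF sa] .
      then consider "F P1 = {a,b}" | e where "e \<noteq> s" "F P1 = {e,b}" "(s,e) \<in> P i" "(e,s) \<in> Q1"
        by blast
      then show "F (P(i := Q)) = {a,b} \<or> (\<exists>e. e \<noteq> s \<and> F (P(i := Q)) = {e,b} \<and> (s,e) \<in> P i \<and> (e,s) \<in> Q)"
      proof cases
        case 1
        have "F (P(i := Q)) = {a,b} \<or> (\<exists>e. e \<noteq> s \<and> F (P(i := Q)) = {e,b} \<and> (s,e) \<in> Q1 \<and> (e,s) \<in> Q)"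
        proof -
          have X: "F (P1(i:=Q)) = {a,b} \<or> (\<exists>e. e \<noteq> s \<and> F (P1(i:=Q)) = {e,b} \<and> (s,e) \<in> P1 i \<and> (e,s) \<in> Q)"
            using mp[OF mp[OF onestep[OF cons spp spo P1p iV md2 1 sA, THEN conjunct2] sa] adj2] .
          then show ?thesis unfolding P1Q P1i .
        qed
        moreover have "\<And>e. (s,e) \<in> Q1 \<Longrightarrow> (s,e) \<in> P i"
        proof -
          fix e assume se: "(s,e) \<in> Q1"
          have eA: "e \<in> A" using linD_sub[OF lQ1 se] by simp
          have "\<forall>x\<in>A. (s,x) \<in> Q1 \<longrightarrow> (s,x) \<in> R" using md1 unfolding moved_down_def by blast
          then show "(s,e) \<in> P i" using eA se unfolding R_def by blast
        qed
        ultimately show ?thesis by blast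
      next
        case (2 e)
        have "F (P(i := Q)) = {e,b}" using os1[OF 2(2)] 2(1) sb by auto
        moreover have "(e,s) \<in> Q"
        proof (rule ccontr)
          assume "(e,s) \<notin> Q"
          have eA: "e \<in> A" using linD_sub[OF lQ1 2(4)] by auto
          then have "(s,e) \<in> Q" using linD_total[OF lQ eA sA] \<open>(e,s) \<notin> Q\<close> by blast
          then have "(s,e) \<in> Q1" using md2 eA unfolding moved_down_def P1i by blast
          then show False using 2(4) linD_antisym[OF lQ1] 2(1) by blast
        qed
        ultimately show ?thesis using 2 by blast
      qed
    qed
  qed
qed

theorem lemma12:
  fixes V :: "'v set" and A :: "'a set" and F :: "('v \<Rightarrow> 'a rel) \<Rightarrow> 'a set"
  assumes "finite V" and "V \<noteq> {}" and "finite A"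
    and "consular_rule V A F" and "SPP V A F" and "SPO V A F"
    and "P \<in> profiles V A" and "F P = {a, b}"
    and "i \<in> V" and "s \<in> A" and "moved_down A (P i) s Q"
  shows "(s \<notin> {a, b} \<longrightarrow> F (P(i := Q)) = F P) \<and>
         (s = a \<longrightarrow> F (P(i := Q)) = F P \<or>
            (\<exists>c. c \<noteq> s \<and> F (P(i := Q)) = {c, b} \<and> (s, c) \<in> P i \<and> (c, s) \<in> Q))"
proof -
  have H: "(s \<noteq> a \<longrightarrow> s \<noteq> b \<longrightarrow> F (P(i := Q)) = {a,b}) \<and>
     (s = a \<longrightarrow> F (P(i := Q)) = {a,b} \<or> (\<exists>e. e \<noteq> s \<and> F (P(i := Q)) = {e,b} \<and> (s,e) \<in> P i \<and> (e,s) \<in> Q))"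
    using induct_main[OF assms(4,5,6,7,9,3,8,10), of "card {x\<in>A. x \<noteq> s \<and> (s,x) \<in> P i \<and> (x,s) \<in> Q}", rule_format, OF assms(11) refl] .
  then show ?thesis using assms(8) by auto
qed

end
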